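(* Let $G$ be an interval graph (possibly colored) with at least one vertex. Then the underlying uncolored graph of $G_{\mathcal{M}}$ is a unit square graph.
   Context: An interval graph is an intersection graph of intervals on the real line. $\mathcal{M}(G)$ is the set of maximal cliques of $G$. $G_{\mathcal{M}}$ is the colored graph with vertex set $V(G)\sqcup\mathcal{M}(G)$, edge set $\{vC \mid C\in\mathcal{M}(G), v\in C\}\cup\{vw\mid v\ne w\in V(G)\}\cup\{CD\mid C\neq D\in\mathcal{M}(G)\}$, and coloring $c(v)=c_G(v)+1$ for $v\in V(G)$, $c(C)=1$ for $C\in\mathcal{M}(G)$. A unit square graph is a graph $H$ admitting $f\colon V(H)\to\mathbb{R}^2$ with $vw\in E(H)$ iff $\|f(v)-f(w)\|_\infty\le1$ for distinct $v,w$. *)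

theory Defs
  imports Complex_Main
begin

definition simple_graph :: "'a set \<Rightarrow> ('a \<Rightarrow> 'a \<Rightarrow> bool) \<Rightarrow> bool" where
  "simple_graph V E \<longleftrightarrow> finite V \<and> (\<forall>v w. E v w \<longrightarrow> v \<in> V \<and> w \<in> V)
     \<and> (\<forall>v w. E v w \<longrightarrow> E w v) \<and> (\<forall>v. \<not> E v v)"

definition interval_graph :: "'a set \<Rightarrow> ('a \<Rightarrow> 'a \<Rightarrow> bool) \<Rightarrow> bool" where
  "interval_graph V E \<longleftrightarrow> simple_graph V E \<and>
     (\<exists>l r :: 'a \<Rightarrow> real. (\<forall>v\<in>V. l v \<le> r v) \<and>
        (\<forall>v\<in>V. \<forall>w\<in>V. v \<noteq> w \<longrightarrow>
            (E v w \<longleftrightarrow> {l v..r v} \<inter> {l w..r w} \<noteq> {})))"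

definition is_clique :: "'a set \<Rightarrow> ('a \<Rightarrow> 'a \<Rightarrow> bool) \<Rightarrow> 'a set \<Rightarrow> bool" where
  "is_clique V E C \<longleftrightarrow> C \<subseteq> V \<and> (\<forall>v\<in>C. \<forall>w\<in>C. v \<noteq> w \<longrightarrow> E v w)"

definition maximal_cliques :: "'a set \<Rightarrow> ('a \<Rightarrow> 'a \<Rightarrow> bool) \<Rightarrow> 'a set set" where
  "maximal_cliques V E = {C. is_clique V E C \<and> (\<forall>D. is_clique V E D \<and> C \<subseteq> D \<longrightarrow> D = C)}"

definition GM_vertices :: "'a set \<Rightarrow> ('a \<Rightarrow> 'a \<Rightarrow> bool) \<Rightarrow> ('a + 'a set) set" where
  "GM_vertices V E = Inl ` V \<union> Inr ` maximal_cliques V E"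

definition GM_edges :: "'a set \<Rightarrow> ('a \<Rightarrow> 'a \<Rightarrow> bool) \<Rightarrow> ('a + 'a set) \<Rightarrow> ('a + 'a set) \<Rightarrow> bool" where
  "GM_edges V E x y \<longleftrightarrow> x \<in> GM_vertices V E \<and> y \<in> GM_vertices V E \<and>
     (case (x, y) of
        (Inl v, Inl w) \<Rightarrow> v \<noteq> w
      | (Inr C, Inr D) \<Rightarrow> C \<noteq> D
      | (Inl v, Inr C) \<Rightarrow> v \<in> C
      | (Inr C, Inl v) \<Rightarrow> v \<in> C)"

text \<open>Colouring of G_M: c(v) = c_G(v)+1, c(C) = 1 (irrelevant for the underlying graph).\<close>
definition GM_colour :: "('a \<Rightarrow> nat) \<Rightarrow> ('a + 'a set) \<Rightarrow> nat" where
  "GM_colour cG x = (case x of Inl v \<Rightarrow> cG v + 1 | Inr C \<Rightarrow> 1)"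

definition unit_square_graph :: "'b set \<Rightarrow> ('b \<Rightarrow> 'b \<Rightarrow> bool) \<Rightarrow> bool" where
  "unit_square_graph V E \<longleftrightarrow> (\<exists>f :: 'b \<Rightarrow> real \<times> real.
     \<forall>v\<in>V. \<forall>w\<in>V. v \<noteq> w \<longrightarrow>
       (E v w \<longleftrightarrow> max \<bar>fst (f v) - fst (f w)\<bar> \<bar>snd (f v) - snd (f w)\<bar> \<le> 1))"

end

theory Submission
  imports Defs
begin

definition gg :: "real \<Rightarrow> real" where "gg x = arctan x / 4"

lemma gg_bd: "\<bar>gg x\<bar> < 1/2"
proof -
  have "\<bar>arctan x\<bar> < pi/2" using arctan_bounded[of x] by auto
  moreover have "pi < 4" using pi_less_4 .
  ultimately show ?thesis unfolding gg_def by auto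
qed

lemma gg_le: "gg x \<le> gg y \<longleftrightarrow> x \<le> y"
  unfolding gg_def using arctan_le_iff[of x y] by auto

lemma key_num:
  fixes a b c :: real
  assumes "\<bar>a\<bar> < 1/2" "\<bar>b\<bar> < 1/2" "\<bar>c\<bar> < 1/2"
  shows "max \<bar>1 + a - c\<bar> \<bar>1 - b + c\<bar> \<le> 1 \<longleftrightarrow> a \<le> c \<and> c \<le> b"
proof -
  have "\<bar>1 + a - c\<bar> = 1 + a - c" "\<bar>1 - b + c\<bar> = 1 - b + c" using assms by auto
  thus ?thesis by (simp only: max.bounded_iff) linarith
qed

lemma clique_point:
  fixes l r :: "'a \<Rightarrow> real"
  assumes ig: "interval_graph V E" and ne: "V \<noteq> {}"
    and C: "C \<in> maximal_cliques V E"
    and lr: "\<forall>v\<in>V. l v \<le> r v"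
    "\<forall>v\<in>V. \<forall>w\<in>V. v \<noteq> w \<longrightarrow> (E v w \<longleftrightarrow> {l v..r v} \<inter> {l w..r w} \<noteq> {})"
  shows "\<exists>p. C = {v\<in>V. l v \<le> p \<and> p \<le> r v}"
proof -
  have sg: "simple_graph V E" using ig unfolding interval_graph_def by (rule conjunct1)
  hence fin: "finite V" unfolding simple_graph_def by (rule conjunct1)
  have CC: "is_clique V E C \<and> (\<forall>D. is_clique V E D \<and> C \<subseteq> D \<longrightarrow> D = C)"
    using C unfolding maximal_cliques_def by (rule CollectD)
  have cl: "is_clique V E C" using CC by (rule conjunct1)
  have mx: "\<And>D. is_clique V E D \<Longrightarrow> C \<subseteq> D \<Longrightarrow> D = C"
    using CC by blast
  have CV: "C \<subseteq> V" using cl unfolding is_clique_def by (rule conjunct1)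
  have Cne: "C \<noteq> {}"
  proof
    assume "C = {}"
    obtain v where v: "v \<in> V" using ne by blast
    have "is_clique V E {v}" using v by (simp add: is_clique_def)
    hence "{v} = C" using mx \<open>C = {}\<close> by blast
    thus False using \<open>C = {}\<close> by simp
  qed
  have finC: "finite C" using CV fin finite_subset by blast
  define p where "p = Max (l ` C)"
  have "p \<in> l ` C" unfolding p_def using finC Cne by (intro Max_in) auto
  then obtain u where u: "u \<in> C" "l u = p" by blast
  let ?S = "{v\<in>V. l v \<le> p \<and> p \<le> r v}"
  have sub: "C \<subseteq> ?S"
  proof
    fix w assume w: "w \<in> C"
    have "l w \<le> p" unfolding p_def using w finC by (intro Max_ge) auto
    moreover have "p \<le> r w"
    proof (cases "u = w")
      case True
      have "l w \<le> r w" using lr(1) w CV by blast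
      thus ?thesis using True u by simp
    next
      case False
      hence "E u w" using cl u w by (auto simp: is_clique_def)
      moreover have "u \<in> V" "w \<in> V" using u w CV by auto
      ultimately have "{l u..r u} \<inter> {l w..r w} \<noteq> {}" using lr(2)[rule_format, OF \<open>u \<in> V\<close> \<open>w \<in> V\<close> False] by simp
      then obtain x where "l u \<le> x" "x \<le> r w" by auto
      thus ?thesis using u by linarith
    qed
    ultimately show "w \<in> ?S" using w CV by auto
  qed
  have "is_clique V E ?S"
    unfolding is_clique_def
  proof (intro conjI ballI impI)
    fix v w assume vw: "v \<in> ?S" "w \<in> ?S" "v \<noteq> w"
    have "p \<in> {l v..r v} \<inter> {l w..r w}" using vw by simp
    hence ne2: "{l v..r v} \<inter> {l w..r w} \<noteq> {}" by blast
    have "v \<in> V" "w \<in> V" using vw by auto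
    thus "E v w" using lr(2)[rule_format, OF \<open>v \<in> V\<close> \<open>w \<in> V\<close> \<open>v \<noteq> w\<close>] ne2 by simp
  qed blast
  hence "?S = C" using mx[OF _ sub] by simp
  thus ?thesis by blast
qed

theorem mainTheorem11:
  fixes V :: "'a set" and E :: "'a \<Rightarrow> 'a \<Rightarrow> bool" and cG :: "'a \<Rightarrow> nat"
  assumes "interval_graph V E"
    and "V \<noteq> {}"
  shows "unit_square_graph (GM_vertices V E) (GM_edges V E)"
proof -
  obtain l r :: "'a \<Rightarrow> real" where lr: "\<forall>v\<in>V. l v \<le> r v"
    "\<forall>v\<in>V. \<forall>w\<in>V. v \<noteq> w \<longrightarrow> (E v w \<longleftrightarrow> {l v..r v} \<inter> {l w..r w} \<noteq> {})"
    using assms(1) unfolding interval_graph_def by blast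
  define pC where "pC C = (SOME p. C = {v\<in>V. l v \<le> p \<and> p \<le> r v})" for C
  have pC: "C = {v\<in>V. l v \<le> pC C \<and> pC C \<le> r v}" if "C \<in> maximal_cliques V E" for C
    unfolding pC_def using someI_ex[OF clique_point[OF assms that lr]] .
  define f where "f x = (case x of Inl v \<Rightarrow> (1 + gg (l v), 1 - gg (r v))
      | Inr C \<Rightarrow> (gg (pC C), - gg (pC C)))" for x
  show ?thesis
    unfolding unit_square_graph_def
  proof (intro exI[of _ f] ballI impI)
    fix x y assume x: "x \<in> GM_vertices V E" and y: "y \<in> GM_vertices V E" and xy: "x \<noteq> y"
    show "GM_edges V E x y \<longleftrightarrow> max \<bar>fst (f x) - fst (f y)\<bar> \<bar>snd (f x) - snd (f y)\<bar> \<le> 1"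
    proof (cases x; cases y)
      fix v w assume "x = Inl v" "y = Inl w"
      moreover have "max \<bar>gg (l v) - gg (l w)\<bar> \<bar>gg (r w) - gg (r v)\<bar> \<le> 1"
        using gg_bd[of "l v"] gg_bd[of "l w"] gg_bd[of "r v"] gg_bd[of "r w"] by (simp only: max.bounded_iff abs_le_iff abs_less_iff) linarith
      ultimately show ?thesis using x y xy by (simp add: GM_edges_def f_def)
    next
      fix C D assume "x = Inr C" "y = Inr D"
      moreover have "max \<bar>gg (pC C) - gg (pC D)\<bar> \<bar>gg (pC D) - gg (pC C)\<bar> \<le> 1"
        using gg_bd[of "pC C"] gg_bd[of "pC D"] by (simp only: max.bounded_iff abs_le_iff abs_less_iff) linarith
      ultimately show ?thesis using x y xy by (simp add: GM_edges_def f_def)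
    next
      fix v C assume h: "x = Inl v" "y = Inr C"
      hence v: "v \<in> V" and C: "C \<in> maximal_cliques V E" using x y
        by (auto simp: GM_vertices_def)
      have "v \<in> C \<longleftrightarrow> l v \<le> pC C \<and> pC C \<le> r v" using pC[OF C] v by blast
      also have "\<dots> \<longleftrightarrow> gg (l v) \<le> gg (pC C) \<and> gg (pC C) \<le> gg (r v)" by (simp add: gg_le)
      also have "\<dots> \<longleftrightarrow> max \<bar>1 + gg (l v) - gg (pC C)\<bar> \<bar>1 - gg (r v) + gg (pC C)\<bar> \<le> 1"
        using key_num[OF gg_bd gg_bd gg_bd] by simp
      finally show ?thesis using h x y by (simp add: GM_edges_def f_def)
    next
      fix C v assume h: "x = Inr C" "y = Inl v"
      hence v: "v \<in> V" and C: "C \<in> maximal_cliques V E" using x y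
        by (auto simp: GM_vertices_def)
      have "v \<in> C \<longleftrightarrow> l v \<le> pC C \<and> pC C \<le> r v" using pC[OF C] v by blast
      also have "\<dots> \<longleftrightarrow> gg (l v) \<le> gg (pC C) \<and> gg (pC C) \<le> gg (r v)" by (simp add: gg_le)
      also have "\<dots> \<longleftrightarrow> max \<bar>1 + gg (l v) - gg (pC C)\<bar> \<bar>1 - gg (r v) + gg (pC C)\<bar> \<le> 1"
        using key_num[OF gg_bd gg_bd gg_bd] by simp
      also have "\<dots> \<longleftrightarrow> max \<bar>gg (pC C) - (1 + gg (l v))\<bar> \<bar>- gg (pC C) - (1 - gg (r v))\<bar> \<le> 1"
      proof -
        have "\<bar>gg (pC C) - (1 + gg (l v))\<bar> = \<bar>1 + gg (l v) - gg (pC C)\<bar>" by arith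
        moreover have "\<bar>- gg (pC C) - (1 - gg (r v))\<bar> = \<bar>1 - gg (r v) + gg (pC C)\<bar>" by arith
        ultimately show ?thesis by simp
      qed
      finally show ?thesis using h x y by (simp add: GM_edges_def f_def)
    qed
  qed
qed

end
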